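(* Let $K_1,K_2$ be finite simplicial complexes on disjoint vertex sets, let $k\ge 0$, and let $K=K_1\vee_k K_2$ be a $k$-wedge sum obtained by identifying a $k$-face $F_1$ of $K_1$ with a $k$-face $F_2$ of $K_2$. If $i\ge k-1$ (and $i\ge 0$), then $B_i(K)$ is balanced if and only if both $B_i(K_1)$ and $B_i(K_2)$ are balanced.
   Context: $S_j(K)$ denotes the set of faces of cardinality $j+1$. The $k$-wedge sum: given $F_1=\{v_0,\dots,v_k\}\in S_k(K_1)$, $F_2=\{u_0,\dots,u_k\}\in S_k(K_2)$ and a bijection $v_j\mapsto u_j$, $K_1\vee_kK_2$ is the complex obtained from $K_1\cup K_2$ by identifying $v_j$ with $u_j$ for all $j$ (so $F_1$ and all its subfaces are identified with $F_2$ and its subfaces). For a complex $K$ with an orientation (ordering of each face up to even permutations), $B_i(K)$ is the signed bipartite graph with vertex set $S_i(K)\cup S_{i+1}(K)$, an edge $\{F,\bar F\}$ whenever $F\subset\bar F$, with sign $\mathrm{sgn}([F],\partial[\bar F])$ (equal to $(-1)^j$ if $F$ is $\bar F$ with its $j$-th vertex removed and the orientation of $F$ agrees with the induced one, and $-(-1)^j$ otherwise). A signed graph is balanced if every cycle has positive sign (product of edge signs); balancedness of $B_i(K)$ does not depend on the chosen orientation. *)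

theory Defs
  imports Main
begin

definition simplicial_complex :: "'v set set \<Rightarrow> bool" where
  "simplicial_complex K \<longleftrightarrow> finite K \<and>
     (\<forall>F\<in>K. finite F \<and> F \<noteq> {}) \<and>
     (\<forall>F\<in>K. \<forall>G. G \<subseteq> F \<and> G \<noteq> {} \<longrightarrow> G \<in> K)"

definition faces_of_dim :: "'v set set \<Rightarrow> nat \<Rightarrow> 'v set set" where
  "faces_of_dim K j = {F \<in> K. card F = j + 1}"

text \<open>The quotient is realised by the map that sends each vertex
of F2 to its partner in F1 and fixes all other vertices; since the vertex sets are
disjoint this is exactly the identification.\<close>
definition wedge_map :: "'v set \<Rightarrow> ('v \<Rightarrow> 'v) \<Rightarrow> 'v \<Rightarrow> 'v" where
  "wedge_map F2 f u = (if u \<in> F2 then f u else u)"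

definition wedge_sum :: "'v set set \<Rightarrow> 'v set set \<Rightarrow> 'v set \<Rightarrow> ('v \<Rightarrow> 'v) \<Rightarrow> 'v set set" where
  "wedge_sum K1 K2 F2 f = K1 \<union> ((\<lambda>G. wedge_map F2 f ` G) ` K2)"

text \<open>An orientation: for each face, an ordering of its vertices (a representative of
its class modulo even permutations).\<close>
definition orientation :: "'v set set \<Rightarrow> ('v set \<Rightarrow> 'v list) \<Rightarrow> bool" where
  "orientation K ori \<longleftrightarrow> (\<forall>F\<in>K. distinct (ori F) \<and> set (ori F) = F)"

fun pos :: "'v list \<Rightarrow> 'v \<Rightarrow> nat" where
  "pos [] x = 0"
| "pos (y # ys) x = (if y = x then 0 else Suc (pos ys x))"

text \<open>Number of inversions of the ordering xs relative to ys; its parity is the parity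
of the permutation taking ys to xs.\<close>
definition inversions :: "'v list \<Rightarrow> 'v list \<Rightarrow> nat" where
  "inversions xs ys = card {(a, b). a < b \<and> b < length xs \<and>
       pos ys (xs ! a) > pos ys (xs ! b)}"

text \<open>sgn([F], \<partial>[Fb]) for F a facet of Fb: Fb with its j-th vertex removed.\<close>
definition incidence_sign :: "('v set \<Rightarrow> 'v list) \<Rightarrow> 'v set \<Rightarrow> 'v set \<Rightarrow> int" where
  "incidence_sign ori F Fb =
     (let x = the_elem (Fb - F);
          j = pos (ori Fb) x;
          induced = remove1 x (ori Fb)
      in if even (inversions (ori F) induced) then (-1) ^ j else - ((-1) ^ j))"

definition B_vertices :: "'v set set \<Rightarrow> nat \<Rightarrow> 'v set set" where
  "B_vertices K i = faces_of_dim K i \<union> faces_of_dim K (i + 1)"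

definition B_adj :: "'v set set \<Rightarrow> nat \<Rightarrow> 'v set \<Rightarrow> 'v set \<Rightarrow> bool" where
  "B_adj K i F G \<longleftrightarrow>
     (F \<in> faces_of_dim K i \<and> G \<in> faces_of_dim K (i + 1) \<and> F \<subseteq> G) \<or>
     (G \<in> faces_of_dim K i \<and> F \<in> faces_of_dim K (i + 1) \<and> G \<subseteq> F)"

definition B_sign :: "('v set \<Rightarrow> 'v list) \<Rightarrow> 'v set \<Rightarrow> 'v set \<Rightarrow> int" where
  "B_sign ori F G = (if card F < card G then incidence_sign ori F G else incidence_sign ori G F)"

definition B_cycle :: "'v set set \<Rightarrow> nat \<Rightarrow> 'v set list \<Rightarrow> bool" where
  "B_cycle K i cs \<longleftrightarrow> length cs \<ge> 3 \<and> distinct cs \<and> set cs \<subseteq> B_vertices K i \<and>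
     (\<forall>m < length cs. B_adj K i (cs ! m) (cs ! ((m + 1) mod length cs)))"

definition cycle_sign :: "('v set \<Rightarrow> 'v list) \<Rightarrow> 'v set list \<Rightarrow> int" where
  "cycle_sign ori cs = (\<Prod>m < length cs. B_sign ori (cs ! m) (cs ! ((m + 1) mod length cs)))"

definition B_balanced :: "'v set set \<Rightarrow> ('v set \<Rightarrow> 'v list) \<Rightarrow> nat \<Rightarrow> bool" where
  "B_balanced K ori i \<longleftrightarrow> (\<forall>cs. B_cycle K i cs \<longrightarrow> cycle_sign ori cs = 1)"

end

theory Submission
  imports Defs
begin


lemma pos_lt: "x \<in> set xs \<Longrightarrow> pos xs x < length xs"
  by (induction xs) auto

lemma nth_pos: "x \<in> set xs \<Longrightarrow> xs ! pos xs x = x"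
  by (induction xs) auto

lemma pos_nth: "distinct xs \<Longrightarrow> a < length xs \<Longrightarrow> pos xs (xs ! a) = a"
proof (induction xs arbitrary: a)
  case Nil then show ?case by simp
next
  case (Cons y ys)
  then show ?case by (cases a) auto
qed

lemma pos_inj: "x \<in> set xs \<Longrightarrow> y \<in> set xs \<Longrightarrow> pos xs x = pos xs y \<Longrightarrow> x = y"
  by (metis nth_pos)

definition Dset :: "'v list \<Rightarrow> 'v list \<Rightarrow> 'v set set" where
  "Dset xs ys = {d. \<exists>u v. d = {u,v} \<and> u \<noteq> v \<and> u \<in> set xs \<and> v \<in> set xs \<and>
      ((pos xs u < pos xs v) \<noteq> (pos ys u < pos ys v))}"

lemma Dset_finite: "finite (Dset xs ys)"
proof -
  have "Dset xs ys \<subseteq> Pow (set xs)" unfolding Dset_def by auto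
  then show ?thesis by (meson finite_Pow_iff finite_set finite_subset)
qed

lemma Dset_mem:
  assumes "u \<in> set xs" "v \<in> set xs" "u \<noteq> v" "set xs \<subseteq> set ys"
  shows "{u,v} \<in> Dset xs ys \<longleftrightarrow> ((pos xs u < pos xs v) \<noteq> (pos ys u < pos ys v))"
proof
  assume "{u,v} \<in> Dset xs ys"
  then obtain u' v' where e: "{u,v} = {u',v'}" and c: "u' \<in> set xs" "v' \<in> set xs"
     "(pos xs u' < pos xs v') \<noteq> (pos ys u' < pos ys v')"
    unfolding Dset_def by auto
  have n1: "pos xs u \<noteq> pos xs v" using assms pos_inj by metis
  have n2: "pos ys u \<noteq> pos ys v" using assms pos_inj by (metis subsetD)
  from e have "(u = u' \<and> v = v') \<or> (u = v' \<and> v = u')" by (simp add: doubleton_eq_iff)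
  then show "((pos xs u < pos xs v) \<noteq> (pos ys u < pos ys v))"
    using c n1 n2 by auto
next
  assume "((pos xs u < pos xs v) \<noteq> (pos ys u < pos ys v))"
  then show "{u,v} \<in> Dset xs ys" unfolding Dset_def using assms by blast
qed

lemma Dset_elem: "d \<in> Dset xs ys \<Longrightarrow> \<exists>u v. d = {u,v} \<and> u \<noteq> v \<and> u \<in> set xs \<and> v \<in> set xs"
  unfolding Dset_def by blast

lemma inv_card:
  assumes "distinct xs" "distinct ys" "set xs \<subseteq> set ys"
  shows "inversions xs ys = card (Dset xs ys)"
proof -
  let ?IP = "{(a, b). a < b \<and> b < length xs \<and> pos ys (xs ! a) > pos ys (xs ! b)}"
  let ?h = "\<lambda>(a,b). {xs ! a, xs ! b}"
  have inj: "inj_on ?h ?IP"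
  proof (rule inj_onI, clarsimp)
    fix a b a' b'
    assume h: "{xs ! a, xs ! b} = {xs ! a', xs ! b'}" "a < b" "b < length xs"
      "a' < b'" "b' < length xs"
    then have "(xs!a = xs!a' \<and> xs!b = xs!b') \<or> (xs!a = xs!b' \<and> xs!b = xs!a')"
      by (simp add: doubleton_eq_iff)
    then show "a = a' \<and> b = b'"
      using h assms(1) by (auto simp: nth_eq_iff_index_eq)
  qed
  have img: "?h ` ?IP = Dset xs ys"
  proof
    show "?h ` ?IP \<subseteq> Dset xs ys"
    proof clarsimp
      fix a b assume h: "a < b" "b < length xs" "pos ys (xs ! b) < pos ys (xs ! a)"
      have "xs ! a \<noteq> xs ! b" using h assms(1) by (simp add: nth_eq_iff_index_eq)
      moreover have "pos xs (xs!a) < pos xs (xs!b)" using h assms(1) by (simp add: pos_nth)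
      ultimately show "{xs ! a, xs ! b} \<in> Dset xs ys"
        unfolding Dset_def using h by force
    qed
  next
    show "Dset xs ys \<subseteq> ?h ` ?IP"
    proof
      fix d assume d: "d \<in> Dset xs ys"
      then obtain u v where uv: "d = {u,v}" "u \<noteq> v" "u \<in> set xs" "v \<in> set xs" and
        c: "(pos xs u < pos xs v) \<noteq> (pos ys u < pos ys v)"
        unfolding Dset_def by blast
      have n1: "pos xs u \<noteq> pos xs v" using uv pos_inj by metis
      have n2: "pos ys u \<noteq> pos ys v" using uv assms pos_inj by (metis subsetD)
      have lu: "pos xs u < length xs" "xs ! pos xs u = u" using uv pos_lt nth_pos by metis+
      have lv: "pos xs v < length xs" "xs ! pos xs v = v" using uv pos_lt nth_pos by metis+
      show "d \<in> ?h ` ?IP"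
      proof (cases "pos xs u < pos xs v")
        case True
        then have "(pos xs u, pos xs v) \<in> ?IP" using c n2 lu lv by auto
        then show ?thesis using uv lu lv by (metis (no_types, lifting) case_prod_conv image_eqI)
      next
        case False
        then have "(pos xs v, pos xs u) \<in> ?IP" using c n1 n2 lu lv by auto
        moreover have "d = ?h (pos xs v, pos xs u)" using uv lu lv by auto
        ultimately show ?thesis by blast
      qed
    qed
  qed
  have "inversions xs ys = card ?IP" unfolding inversions_def by simp
  also have "\<dots> = card (?h ` ?IP)" using inj by (simp add: card_image)
  finally show ?thesis using img by simp
qed

lemma card_symdiff_parity:
  assumes "finite A" "finite B"
  shows "even (card ((A - B) \<union> (B - A)) + card A + card B)"
proof -
  have "card ((A - B) \<union> (B - A)) = card (A - B) + card (B - A)"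
    by (rule card_Un_disjoint) (use assms in auto)
  moreover have "card A = card (A - B) + card (A \<inter> B)"
    using card_Int_Diff[OF assms(1), of B] by simp
  moreover have "card B = card (B - A) + card (A \<inter> B)"
    using card_Int_Diff[OF assms(2), of A] by (simp add: Int_commute)
  ultimately show ?thesis by presburger
qed

lemma inv_cocycle:
  assumes "distinct xs" "distinct ys" "distinct zs" "set ys = set xs" "set zs = set xs"
  shows "even (inversions xs zs + inversions xs ys + inversions ys zs)"
proof -
  have eq: "Dset xs zs = (Dset xs ys - Dset ys zs) \<union> (Dset ys zs - Dset xs ys)"
  proof (rule set_eqI)
    fix d
    show "d \<in> Dset xs zs \<longleftrightarrow> d \<in> (Dset xs ys - Dset ys zs) \<union> (Dset ys zs - Dset xs ys)"
    proof (cases "\<exists>u v. d = {u,v} \<and> u \<noteq> v \<and> u \<in> set xs \<and> v \<in> set xs")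
      case True
      then obtain u v where uv: "d = {u,v}" "u \<noteq> v" "u \<in> set xs" "v \<in> set xs" by blast
      have m1: "d \<in> Dset xs zs \<longleftrightarrow> ((pos xs u < pos xs v) \<noteq> (pos zs u < pos zs v))"
        using Dset_mem[of u xs v zs] uv assms by auto
      have m2: "d \<in> Dset xs ys \<longleftrightarrow> ((pos xs u < pos xs v) \<noteq> (pos ys u < pos ys v))"
        using Dset_mem[of u xs v ys] uv assms by auto
      have m3: "d \<in> Dset ys zs \<longleftrightarrow> ((pos ys u < pos ys v) \<noteq> (pos zs u < pos zs v))"
        using Dset_mem[of u ys v zs] uv assms by auto
      show ?thesis using m1 m2 m3 by blast
    next
      case False
      then show ?thesis using Dset_elem[of d xs zs] Dset_elem[of d xs ys] Dset_elem[of d ys zs] assms(4) by auto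
    qed
  qed
  have c1: "inversions xs zs = card (Dset xs zs)" using inv_card assms by auto
  have c2: "inversions xs ys = card (Dset xs ys)" using inv_card assms by auto
  have c3: "inversions ys zs = card (Dset ys zs)" using inv_card assms by auto
  show ?thesis unfolding c1 c2 c3 eq
    using card_symdiff_parity[OF Dset_finite Dset_finite] by (simp add: add.commute add.left_commute)
qed



lemma pos_remove1:
  "distinct L \<Longrightarrow> u \<in> set L \<Longrightarrow> x \<in> set L \<Longrightarrow> u \<noteq> x \<Longrightarrow>
   pos (remove1 x L) u = (if pos L u < pos L x then pos L u else pos L u - 1)"
proof (induction L)
  case Nil then show ?case by simp
next
  case (Cons y ys)
  show ?case
  proof (cases "y = x")
    case True
    then show ?thesis using Cons.prems by auto
  next
    case False
    then have xs: "x \<in> set ys" using Cons.prems by auto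
    show ?thesis
    proof (cases "y = u")
      case True then show ?thesis using False by auto
    next
      case yu: False
      then have us: "u \<in> set ys" using Cons.prems by auto
      have "pos ys u \<noteq> pos ys x" using pos_inj us xs Cons.prems(4) by metis
      then show ?thesis using Cons.IH[OF _ us xs] Cons.prems False yu by auto
    qed
  qed
qed

lemma pos_remove1_less:
  assumes "distinct L" "u \<in> set L" "v \<in> set L" "x \<in> set L" "u \<noteq> x" "v \<noteq> x" "u \<noteq> v"
  shows "(pos (remove1 x L) u < pos (remove1 x L) v) = (pos L u < pos L v)"
proof -
  have "pos L u \<noteq> pos L v" using assms pos_inj by metis
  moreover have "pos L u \<noteq> pos L x" using assms pos_inj by metis
  moreover have "pos L v \<noteq> pos L x" using assms pos_inj by metis
  ultimately show ?thesis using pos_remove1[OF assms(1,2,4,5)] pos_remove1[OF assms(1,3,4,6)]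
    by auto
qed

lemma inv_front:
  assumes "distinct L" "x \<in> set L"
  shows "inversions L (x # remove1 x L) = pos L x"
proof -
  let ?R = "remove1 x L"
  let ?S = "{v \<in> set L. pos L v < pos L x}"
  have dR: "distinct (x # ?R)" using assms by auto
  have sR: "set (x # ?R) = set L" using assms by auto
  have D: "Dset L (x # ?R) = (\<lambda>v. {v, x}) ` ?S"
  proof (rule set_eqI)
    fix d show "d \<in> Dset L (x # ?R) \<longleftrightarrow> d \<in> (\<lambda>v. {v, x}) ` ?S"
    proof
      assume "d \<in> Dset L (x # ?R)"
      then obtain u v where uv: "d = {u,v}" "u \<noteq> v" "u \<in> set L" "v \<in> set L" and
        c: "(pos L u < pos L v) \<noteq> (pos (x # ?R) u < pos (x # ?R) v)"
        unfolding Dset_def by blast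
      have nuv: "pos L u \<noteq> pos L v" using uv pos_inj by metis
      show "d \<in> (\<lambda>v. {v, x}) ` ?S"
      proof (cases "u = x \<or> v = x")
        case True
        then show ?thesis
        proof
          assume ux: "u = x"
          then have "pos L v < pos L x" using c uv nuv by auto
          then show ?thesis using uv ux by blast
        next
          assume vx: "v = x"
          then have "pos L u < pos L x" using c uv nuv by auto
          then show ?thesis using uv vx by blast
        qed
      next
        case False
        then have "(pos (x # ?R) u < pos (x # ?R) v) = (pos L u < pos L v)"
          using pos_remove1_less[OF assms(1) uv(3,4) assms(2)] uv by auto
        then show ?thesis using c by blast
      qed
    next
      assume "d \<in> (\<lambda>v. {v, x}) ` ?S"
      then obtain v where v: "d = {v,x}" "v \<in> set L" "pos L v < pos L x" by blast
      then have vx: "v \<noteq> x" by auto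
      have "{v,x} \<in> Dset L (x # ?R)"
        using Dset_mem[of v L x "x # ?R"] v vx sR assms by auto
      then show "d \<in> Dset L (x # ?R)" using v by simp
    qed
  qed
  have inj: "inj_on (\<lambda>v. {v, x}) ?S" by (rule inj_onI) (auto simp: doubleton_eq_iff)
  have S: "?S = (\<lambda>a. L ! a) ` {..<pos L x}"
  proof (rule set_eqI)
    fix v show "v \<in> ?S \<longleftrightarrow> v \<in> (\<lambda>a. L ! a) ` {..<pos L x}"
    proof
      assume "v \<in> ?S" then show "v \<in> (\<lambda>a. L ! a) ` {..<pos L x}"
        by (metis (mono_tags, lifting) lessThan_iff mem_Collect_eq nth_pos image_eqI)
    next
      assume "v \<in> (\<lambda>a. L ! a) ` {..<pos L x}"
      then obtain a where a: "a < pos L x" "v = L ! a" by auto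
      have "pos L x < length L" using pos_lt assms by metis
      then show "v \<in> ?S" using a assms pos_nth by fastforce
    qed
  qed
  have injL: "inj_on (\<lambda>a. L ! a) {..<pos L x}"
  proof (rule inj_onI)
    fix a b assume "a \<in> {..<pos L x}" "b \<in> {..<pos L x}" "L ! a = L ! b"
    moreover have "pos L x < length L" using pos_lt assms by metis
    ultimately show "a = b" using assms(1) by (simp add: nth_eq_iff_index_eq)
  qed
  have "inversions L (x # ?R) = card (Dset L (x # ?R))"
    using inv_card[of L "x # ?R"] assms dR sR by auto
  also have "\<dots> = card ?S" unfolding D using inj by (simp add: card_image)
  also have "\<dots> = pos L x" unfolding S using injL by (simp add: card_image)
  finally show ?thesis .
qed

lemma inv_cons:
  assumes "distinct (x # R)" "distinct (x # R')" "set R' = set R"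
  shows "inversions (x # R) (x # R') = inversions R R'"
proof -
  have "Dset (x # R) (x # R') = Dset R R'"
  proof (rule set_eqI)
    fix d show "d \<in> Dset (x # R) (x # R') \<longleftrightarrow> d \<in> Dset R R'"
    proof
      assume "d \<in> Dset (x # R) (x # R')"
      then obtain u v where uv: "d = {u,v}" "u \<noteq> v" "u \<in> set (x#R)" "v \<in> set (x#R)" and
        c: "(pos (x#R) u < pos (x#R) v) \<noteq> (pos (x # R') u < pos (x # R') v)"
        unfolding Dset_def by blast
      have "u \<noteq> x" "v \<noteq> x" using c uv by auto
      then show "d \<in> Dset R R'" using c uv unfolding Dset_def by auto
    next
      assume "d \<in> Dset R R'"
      then obtain u v where uv: "d = {u,v}" "u \<noteq> v" "u \<in> set R" "v \<in> set R" and
        c: "(pos R u < pos R v) \<noteq> (pos R' u < pos R' v)"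
        unfolding Dset_def by blast
      have "u \<noteq> x" "v \<noteq> x" using assms uv by auto
      then show "d \<in> Dset (x # R) (x # R')" using c uv unfolding Dset_def by auto
    qed
  qed
  moreover have "inversions (x # R) (x # R') = card (Dset (x # R) (x # R'))"
    using inv_card assms by (metis list.set(2) order_refl)
  moreover have "inversions R R' = card (Dset R R')"
    using inv_card assms by (metis distinct.simps(2) order_refl)
  ultimately show ?thesis by simp
qed

lemma neg_one_pow_eq: "even (a + b) \<Longrightarrow> (-1::int) ^ a = (-1) ^ b"
  by (auto simp: minus_one_power_iff)

lemma isign_pow:
  "incidence_sign ori u v = (-1) ^ (pos (ori v) (the_elem (v - u)) +
      inversions (ori u) (remove1 (the_elem (v - u)) (ori v)))"
  by (auto simp: incidence_sign_def Let_def power_add minus_one_power_iff)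

lemma reorient_sign:
  assumes "distinct (o1 u)" "set (o1 u) = u" "distinct (o2 u)" "set (o2 u) = u"
    "distinct (o1 v)" "set (o1 v) = v" "distinct (o2 v)" "set (o2 v) = v"
    "v - u = {x}" "u \<subseteq> v"
  shows "incidence_sign o2 u v =
     (-1) ^ inversions (o2 u) (o1 u) * (-1) ^ inversions (o2 v) (o1 v) * incidence_sign o1 u v"
proof -
  have te: "the_elem (v - u) = x" using assms(9) by simp
  define L where "L = o1 v"
  define L' where "L' = o2 v"
  define R where "R = remove1 x L"
  define R' where "R' = remove1 x L'"
  have xv: "x \<in> v" using assms(9) by auto
  have sR: "set R = u" unfolding R_def L_def using assms by auto
  have sR': "set R' = u" unfolding R'_def L'_def using assms by auto
  have dR: "distinct R" "distinct R'" unfolding R_def R'_def L_def L'_def using assms by auto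
  have xR: "x \<notin> set R" "x \<notin> set R'" using sR sR' assms(9) by auto
  have c1: "even (inversions (o2 u) R' + inversions (o2 u) (o1 u) + inversions (o1 u) R')"
    by (rule inv_cocycle) (use assms dR sR' in auto)
  have c2: "even (inversions (o1 u) R' + inversions (o1 u) R + inversions R R')"
    by (rule inv_cocycle) (use assms dR sR sR' in auto)
  have c3: "even (inversions L' (x # R') + inversions L' L + inversions L (x # R'))"
    by (rule inv_cocycle) (use assms dR sR sR' xR xv in \<open>auto simp: L_def L'_def\<close>)
  have c4: "even (inversions L (x # R') + inversions L (x # R) + inversions (x # R) (x # R'))"
    by (rule inv_cocycle) (use assms dR sR sR' xR xv in \<open>auto simp: L_def L'_def\<close>)
  have e1: "inversions L' (x # R') = pos L' x"
    unfolding R'_def by (rule inv_front) (use assms xv in \<open>auto simp: L'_def\<close>)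
  have e2: "inversions L (x # R) = pos L x"
    unfolding R_def by (rule inv_front) (use assms xv in \<open>auto simp: L_def\<close>)
  have e3: "inversions (x # R) (x # R') = inversions R R'"
    by (rule inv_cons) (use dR xR sR sR' in auto)
  have ev: "even ((pos L' x + inversions (o2 u) R') +
     (inversions (o2 u) (o1 u) + inversions L' L + (pos L x + inversions (o1 u) R)))"
    using c1 c2 c3 c4 e1 e2 e3 by presburger
  have "incidence_sign o2 u v = (-1) ^ (pos L' x + inversions (o2 u) R')"
    unfolding isign_pow te L'_def R'_def ..
  also have "\<dots> = (-1) ^ (inversions (o2 u) (o1 u) + inversions L' L + (pos L x + inversions (o1 u) R))"
    using neg_one_pow_eq[OF ev] .
  also have "\<dots> = (-1) ^ inversions (o2 u) (o1 u) * (-1) ^ inversions (o2 v) (o1 v) * incidence_sign o1 u v"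
    unfolding isign_pow te L_def L'_def R_def power_add by simp
  finally show ?thesis .
qed



definition cpairs :: "'a list \<Rightarrow> ('a \<times> 'a) list" where
  "cpairs cs = zip cs (rotate1 cs)"

definition ppairs :: "'a list \<Rightarrow> ('a \<times> 'a) list" where
  "ppairs xs = zip xs (tl xs)"

lemma prod_list_nth: "prod_list (map g xs) = (\<Prod>m<length xs. g (xs ! m))"
proof (induction xs)
  case Nil then show ?case by simp
next
  case (Cons a xs)
  then show ?case by (simp add: prod.lessThan_Suc_shift del: prod.lessThan_Suc)
qed

lemma set_cpairs: "set (cpairs cs) = {(cs ! m, cs ! ((m + 1) mod length cs)) | m. m < length cs}"
  unfolding cpairs_def by (auto simp: set_zip nth_rotate1)

lemma B_cycle_alt:
  "B_cycle K i cs \<longleftrightarrow> 3 \<le> length cs \<and> distinct cs \<and> set cs \<subseteq> B_vertices K i \<and>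
     (\<forall>p \<in> set (cpairs cs). B_adj K i (fst p) (snd p))"
  unfolding B_cycle_def set_cpairs by auto

lemma cycle_sign_alt:
  "cycle_sign ori cs = prod_list (map (\<lambda>p. B_sign ori (fst p) (snd p)) (cpairs cs))"
  unfolding cycle_sign_def prod_list_nth cpairs_def by (simp add: nth_rotate1)

lemma zip_rotate1: "length xs = length ys \<Longrightarrow> zip (rotate1 xs) (rotate1 ys) = rotate1 (zip xs ys)"
  by (cases xs; cases ys) auto

lemma cpairs_rotate1: "cpairs (rotate1 cs) = rotate1 (cpairs cs)"
  unfolding cpairs_def by (simp add: zip_rotate1)

lemma prod_list_rotate1: "prod_list (map f (rotate1 l)) = prod_list (map (f::_\<Rightarrow>int) l)"
  by (cases l) (auto simp: mult.commute)

lemma cycle_rotate1: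
  "B_cycle K i (rotate1 cs) = B_cycle K i cs \<and> cycle_sign ori (rotate1 cs) = cycle_sign ori cs"
  unfolding B_cycle_alt cycle_sign_alt cpairs_rotate1 rotate1_map[symmetric]
  by (simp add: prod_list_rotate1 rotate1_map)

lemma cycle_rotate:
  "B_cycle K i (rotate n cs) = B_cycle K i cs \<and> cycle_sign ori (rotate n cs) = cycle_sign ori cs"
proof (induction n)
  case 0 then show ?case by simp
next
  case (Suc n) then show ?case using cycle_rotate1[of K i "rotate n cs" ori] by simp
qed

lemma cycle_swap:
  "B_cycle K i (ys @ xs) = B_cycle K i (xs @ ys) \<and> cycle_sign ori (ys @ xs) = cycle_sign ori (xs @ ys)"
  using cycle_rotate[of K i "length xs" "xs @ ys" ori] by (simp add: rotate_append)

lemma zip_snoc_left: "length ys = length xs \<Longrightarrow> zip (xs @ [y]) ys = zip xs ys"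
  by (induction xs arbitrary: ys) (auto simp: length_Suc_conv)

lemma cpairs_path: "cpairs (x # Q) = ppairs (x # Q @ [x])"
  unfolding cpairs_def ppairs_def
  by (simp add: zip_snoc_left[of "Q @ [x]" "x # Q", simplified])

lemma ppairs_cons2: "ppairs (a # b # zs) = (a, b) # ppairs (b # zs)"
  unfolding ppairs_def by simp

lemma ppairs_app: "ppairs (xs @ y # ys) = ppairs (xs @ [y]) @ ppairs (y # ys)"
proof (induction xs)
  case Nil then show ?case by (simp add: ppairs_def)
next
  case (Cons a xs)
  then show ?case by (cases xs) (auto simp: ppairs_cons2)
qed

lemma set_ppairs_sub: "p \<in> set (ppairs xs) \<Longrightarrow> fst p \<in> set xs \<and> snd p \<in> set xs"
proof -
  assume p: "p \<in> set (ppairs xs)"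
  then have "snd p \<in> set (tl xs)" unfolding ppairs_def by (metis prod.collapse set_zip_rightD)
  then have "snd p \<in> set xs" by (cases xs) auto
  moreover have "fst p \<in> set xs" using p unfolding ppairs_def by (metis prod.collapse set_zip_leftD)
  ultimately show ?thesis by simp
qed

definition psign :: "('v set \<Rightarrow> 'v list) \<Rightarrow> 'v set list \<Rightarrow> int" where
  "psign ori xs = prod_list (map (\<lambda>p. B_sign ori (fst p) (snd p)) (ppairs xs))"

lemma cpairs_split:
  "cpairs (x # P1 @ y # P2) = ppairs (x # P1 @ [y]) @ ppairs (y # P2 @ [x])"
  using ppairs_app[of "x # P1" y "P2 @ [x]"] by (simp add: cpairs_path)

lemma cpairs_chord1: "cpairs (x # P1 @ [y]) = ppairs (x # P1 @ [y]) @ [(y, x)]"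
  using ppairs_app[of "x # P1" y "[x]"] by (simp add: cpairs_path ppairs_def)

lemma cpairs_ext1: "cpairs (x # P1 @ [y, w]) = ppairs (x # P1 @ [y]) @ [(y, w), (w, x)]"
  using ppairs_app[of "x # P1" y "[w, x]"] by (simp add: cpairs_path ppairs_def)

lemma B_sign_sq: "B_sign ori a b * B_sign ori a b = 1"
proof -
  have "\<And>n. ((-1::int) ^ n) * ((-1) ^ n) = 1" by (simp add: power_mult_distrib[symmetric])
  then show ?thesis unfolding B_sign_def isign_pow by simp
qed

lemma B_adj_card: "B_adj K i u v \<Longrightarrow> card u \<noteq> card v"
  unfolding B_adj_def faces_of_dim_def by auto

lemma B_adj_sym: "B_adj K i u v = B_adj K i v u"
  unfolding B_adj_def by auto

lemma B_sign_sym: "card a \<noteq> card b \<Longrightarrow> B_sign ori a b = B_sign ori b a"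
  unfolding B_sign_def by auto

lemma split_chord:
  assumes cyc: "B_cycle K i (x # P1 @ y # P2)" and ne: "P1 \<noteq> []" "P2 \<noteq> []"
    and ch: "B_adj K i x y"
  shows "B_cycle K i (x # P1 @ [y]) \<and> B_cycle K i (y # P2 @ [x]) \<and>
     length (x # P1 @ [y]) < length (x # P1 @ y # P2) \<and>
     length (y # P2 @ [x]) < length (x # P1 @ y # P2) \<and>
     cycle_sign ori (x # P1 @ [y]) * cycle_sign ori (y # P2 @ [x]) = cycle_sign ori (x # P1 @ y # P2)"
proof -
  note cp = cpairs_split[of x P1 y P2]
  have c2: "cpairs (y # P2 @ [x]) = ppairs (y # P2 @ [x]) @ [(x, y)]"
    using cpairs_chord1[of y P2 x] .
  from cyc have d: "distinct (x # P1 @ y # P2)" and s: "set (x # P1 @ y # P2) \<subseteq> B_vertices K i"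
    and adj: "\<forall>p \<in> set (cpairs (x # P1 @ y # P2)). B_adj K i (fst p) (snd p)"
    unfolding B_cycle_alt by auto
  have l1: "3 \<le> length (x # P1 @ [y])" "3 \<le> length (y # P2 @ [x])" using ne by (auto simp: neq_Nil_conv)
  have a1: "B_cycle K i (x # P1 @ [y])"
    unfolding B_cycle_alt cpairs_chord1 using l1 d s adj ch unfolding cp by (auto simp: B_adj_sym)
  have a2: "B_cycle K i (y # P2 @ [x])"
    unfolding B_cycle_alt c2 using l1 d s adj ch unfolding cp by (auto simp: B_adj_sym)
  have cd: "card x \<noteq> card y" using B_adj_card[OF ch] .
  have "cycle_sign ori (x # P1 @ [y]) * cycle_sign ori (y # P2 @ [x]) =
      cycle_sign ori (x # P1 @ y # P2) * (B_sign ori y x * B_sign ori x y)"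
    unfolding cycle_sign_alt cpairs_chord1 c2 cp by (simp add: ac_simps)
  also have "\<dots> = cycle_sign ori (x # P1 @ y # P2)"
    using B_sign_sym[OF cd] B_sign_sq by (metis mult.right_neutral)
  finally show ?thesis using a1 a2 ne by auto
qed

lemma split_ext:
  assumes cyc: "B_cycle K i (x # P1 @ y # P2)" and ne: "length P1 \<ge> 2" "length P2 \<ge> 2"
    and w: "w \<notin> set (x # P1 @ y # P2)" "w \<in> B_vertices K i" "B_adj K i x w" "B_adj K i y w"
  shows "B_cycle K i (x # P1 @ [y, w]) \<and> B_cycle K i (y # P2 @ [x, w]) \<and>
     length (x # P1 @ [y, w]) < length (x # P1 @ y # P2) \<and>
     length (y # P2 @ [x, w]) < length (x # P1 @ y # P2) \<and>
     cycle_sign ori (x # P1 @ [y, w]) * cycle_sign ori (y # P2 @ [x, w]) = cycle_sign ori (x # P1 @ y # P2)"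
proof -
  note cp = cpairs_split[of x P1 y P2]
  from cyc have d: "distinct (x # P1 @ y # P2)" and s: "set (x # P1 @ y # P2) \<subseteq> B_vertices K i"
    and adj: "\<forall>p \<in> set (cpairs (x # P1 @ y # P2)). B_adj K i (fst p) (snd p)"
    unfolding B_cycle_alt by auto
  have a1: "B_cycle K i (x # P1 @ [y, w])"
    unfolding B_cycle_alt cpairs_ext1 using ne d s adj w unfolding cp by (auto simp: B_adj_sym)
  have a2: "B_cycle K i (y # P2 @ [x, w])"
    unfolding B_cycle_alt cpairs_ext1 using ne d s adj w unfolding cp by (auto simp: B_adj_sym)
  have cd: "card x \<noteq> card w" "card y \<noteq> card w" using B_adj_card w by metis+
  have "cycle_sign ori (x # P1 @ [y, w]) * cycle_sign ori (y # P2 @ [x, w]) =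
      cycle_sign ori (x # P1 @ y # P2) * ((B_sign ori y w * B_sign ori w y) * (B_sign ori w x * B_sign ori x w))"
    unfolding cycle_sign_alt cpairs_ext1 cp by (simp add: ac_simps)
  also have "\<dots> = cycle_sign ori (x # P1 @ y # P2)"
    using B_sign_sym[OF cd(1)] B_sign_sym[OF cd(2)] B_sign_sq by (metis mult.right_neutral)
  finally show ?thesis using a1 a2 ne by auto
qed



definition dclosed :: "'v set set \<Rightarrow> bool" where
  "dclosed A \<longleftrightarrow> (\<forall>G\<in>A. \<forall>H. H \<subseteq> G \<and> H \<noteq> {} \<longrightarrow> H \<in> A)"

lemma adj_in: "B_adj A i u v \<Longrightarrow> u \<in> A \<and> v \<in> A"
  unfolding B_adj_def faces_of_dim_def by auto

lemma cross:
  assumes split: "\<And>u v. B_adj K i u v \<Longrightarrow> B_adj A i u v \<or> B_adj B i u v"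
    and "\<forall>p\<in>set (ppairs (a # U @ [b])). B_adj K i (fst p) (snd p)"
    and "a \<in> A" "a \<notin> B" "\<forall>z\<in>set U. \<not> (z \<in> A \<and> z \<in> B)"
  shows "b \<in> A"
  using assms(2-)
proof (induction U arbitrary: a)
  case Nil
  then have "B_adj K i a b" by (simp add: ppairs_def)
  then show ?case using split adj_in Nil.prems by blast
next
  case (Cons z U)
  then have "B_adj K i a z" by (simp add: ppairs_cons2)
  then have "z \<in> A" using split adj_in Cons.prems by blast
  then have "z \<notin> B" using Cons.prems by auto
  moreover have "\<forall>p\<in>set (ppairs (z # U @ [b])). B_adj K i (fst p) (snd p)"
    using Cons.prems(1) by (simp add: ppairs_cons2)
  ultimately show ?case using Cons.IH \<open>z \<in> A\<close> Cons.prems by auto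
qed

lemma facet_common:
  assumes "x \<noteq> y" "x \<subseteq> F" "y \<subseteq> F" "card x = i + 1" "card y = i + 1" "card F = i + 2"
    "finite F" "finite c" "card c = i + 2" "x \<subseteq> c" "y \<subseteq> c"
  shows "c = F"
proof -
  have fx: "finite x" "finite y" using assms finite_subset by metis+
  have "\<not> y \<subseteq> x"
  proof
    assume "y \<subseteq> x" then have "y = x" using assms fx by (metis card_subset_eq)
    then show False using assms by simp
  qed
  then have "x \<subset> x \<union> y" by auto
  then have "card x < card (x \<union> y)" using fx by (meson finite_UnI psubset_card_mono)
  then have c1: "card (x \<union> y) \<ge> i + 2" using assms by simp
  have "x \<union> y = F" using c1 assms by (metis Un_least card_mono card_subset_eq le_antisym)
  moreover have "x \<union> y = c" using c1 assms by (metis Un_least card_mono card_subset_eq le_antisym)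
  ultimately show ?thesis by simp
qed

locale wsplit =
  fixes K A B :: "'v set set" and F :: "'v set" and i :: nat
  assumes KAB: "K = A \<union> B" and dA: "dclosed A" and dB: "dclosed B"
    and fin: "\<forall>G\<in>K. finite G" and FA: "F \<in> A" and FB: "F \<in> B"
    and AB: "\<And>G. G \<in> A \<Longrightarrow> G \<in> B \<Longrightarrow> G \<subseteq> F" and cF: "card F \<le> i + 2"
begin

lemma closedA: "G \<in> A \<Longrightarrow> H \<subseteq> G \<Longrightarrow> card H = Suc j \<Longrightarrow> H \<in> A"
  using dA unfolding dclosed_def by (metis card.empty nat.distinct(1))

lemma closedB: "G \<in> B \<Longrightarrow> H \<subseteq> G \<Longrightarrow> card H = Suc j \<Longrightarrow> H \<in> B"
  using dB unfolding dclosed_def by (metis card.empty nat.distinct(1))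

lemma split_adj: "B_adj K i u v \<Longrightarrow> B_adj A i u v \<or> B_adj B i u v"
proof -
  assume h: "B_adj K i u v"
  have c1: "u \<in> A \<or> u \<in> B" "v \<in> A \<or> v \<in> B"
    using h unfolding B_adj_def faces_of_dim_def KAB by auto
  show ?thesis
  proof (cases "u \<in> faces_of_dim K i")
    case True
    then have hh: "v \<in> faces_of_dim K (i+1)" "u \<subseteq> v" "card u = Suc i" "card v = Suc (Suc i)"
      using h unfolding B_adj_def faces_of_dim_def by auto
    show ?thesis
    proof (cases "v \<in> A")
      case True
      then have "u \<in> A" using closedA hh by blast
      then show ?thesis using True hh unfolding B_adj_def faces_of_dim_def by auto
    next
      case False
      then have vB: "v \<in> B" using c1 by auto
      then have "u \<in> B" using closedB hh by blast
      then show ?thesis using vB hh unfolding B_adj_def faces_of_dim_def by auto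
    qed
  next
    case False
    then have hh: "u \<in> faces_of_dim K (i+1)" "v \<subseteq> u" "card v = Suc i" "card u = Suc (Suc i)"
      using h unfolding B_adj_def faces_of_dim_def by auto
    show ?thesis
    proof (cases "u \<in> A")
      case True
      then have "v \<in> A" using closedA hh by blast
      then show ?thesis using True hh unfolding B_adj_def faces_of_dim_def by auto
    next
      case False
      then have uB: "u \<in> B" using c1 by auto
      then have "v \<in> B" using closedB hh by blast
      then show ?thesis using uB hh unfolding B_adj_def faces_of_dim_def by auto
    qed
  qed
qed

lemma adj_monoA: "B_adj A i u v \<Longrightarrow> B_adj K i u v"
  unfolding B_adj_def faces_of_dim_def KAB by auto

lemma adj_monoB: "B_adj B i u v \<Longrightarrow> B_adj K i u v"
  unfolding B_adj_def faces_of_dim_def KAB by auto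

lemma adj_restrict: "B_adj K i u v \<Longrightarrow> u \<in> C \<Longrightarrow> v \<in> C \<Longrightarrow> B_adj C i u v"
  unfolding B_adj_def faces_of_dim_def by auto

lemma cycle_restrict: "B_cycle K i cs \<Longrightarrow> set cs \<subseteq> C \<Longrightarrow> B_cycle C i cs"
proof -
  assume c: "B_cycle K i cs" and s: "set cs \<subseteq> C"
  have "set cs \<subseteq> B_vertices C i"
    using c s unfolding B_cycle_def B_vertices_def faces_of_dim_def by auto
  moreover have "\<forall>p \<in> set (cpairs cs). B_adj C i (fst p) (snd p)"
  proof
    fix p assume p: "p \<in> set (cpairs cs)"
    then have "B_adj K i (fst p) (snd p)" using c unfolding B_cycle_alt by auto
    moreover have "fst p \<in> C" using p s unfolding cpairs_def
      by (metis prod.collapse set_zip_leftD subsetD)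
    moreover have "snd p \<in> C" using p s unfolding cpairs_def
      by (metis prod.collapse set_zip_rightD subsetD set_rotate1)
    ultimately show "B_adj C i (fst p) (snd p)" using adj_restrict by blast
  qed
  ultimately show ?thesis using c unfolding B_cycle_alt by auto
qed

lemmas cycle_restrictA = cycle_restrict[where C = A]
lemmas cycle_restrictB = cycle_restrict[where C = B]

lemma cycle_monoA: "B_cycle A i cs \<Longrightarrow> B_cycle K i cs"
  unfolding B_cycle_def B_vertices_def faces_of_dim_def using adj_monoA KAB by auto

lemma cycle_monoB: "B_cycle B i cs \<Longrightarrow> B_cycle K i cs"
  unfolding B_cycle_def B_vertices_def faces_of_dim_def using adj_monoB KAB by auto

lemma finF: "finite F" using fin FA KAB by auto

lemma shared_card:
  assumes "v \<in> B_vertices K i" "v \<in> A" "v \<in> B" "v \<noteq> F"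
  shows "card v = i + 1 \<and> card F = i + 2 \<and> B_adj K i v F"
proof -
  have sub: "v \<subset> F" using AB assms by auto
  have "card v < card F" using psubset_card_mono[OF finF sub] .
  moreover have cv: "card v = i + 1 \<or> card v = i + 2"
    using assms(1) unfolding B_vertices_def faces_of_dim_def by auto
  ultimately have c: "card v = i + 1" "card F = i + 2" using cF by auto
  have "B_adj K i v F"
    unfolding B_adj_def faces_of_dim_def using c sub assms FA KAB
    by (auto simp: B_vertices_def faces_of_dim_def)
  then show ?thesis using c by simp
qed

lemma adj_facet:
  assumes "B_adj K i x c" "card x = i + 1"
  shows "x \<subseteq> c \<and> card c = i + 2 \<and> finite c"
  using assms fin unfolding B_adj_def faces_of_dim_def by auto

theorem decomp:
  assumes balA: "B_balanced A ori i" and balB: "B_balanced B ori i"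
  shows "B_cycle K i cs \<Longrightarrow> cycle_sign ori cs = 1"
proof (induction "length cs" arbitrary: cs rule: less_induct)
  case less
  have cyc: "B_cycle K i cs" by (rule less.prems)
  have sK: "set cs \<subseteq> B_vertices K i" using cyc unfolding B_cycle_def by auto
  have sK2: "set cs \<subseteq> A \<union> B" using sK unfolding B_vertices_def faces_of_dim_def KAB by auto
  show ?case
  proof (cases "set cs \<subseteq> A")
    case True
    then show ?thesis using cycle_restrictA[OF cyc] balA unfolding B_balanced_def by auto
  next
    case nA: False
    show ?thesis
    proof (cases "set cs \<subseteq> B")
      case True
      then show ?thesis using cycle_restrictB[OF cyc] balB unfolding B_balanced_def by auto
    next
      case nB: False
      obtain a where a: "a \<in> set cs" "a \<notin> B" "a \<in> A" using nB sK2 by auto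
      obtain b where b: "b \<in> set cs" "b \<notin> A" "b \<in> B" using nA sK2 by auto
      obtain L1 L2 where csL: "cs = L1 @ a # L2" using a(1) by (meson split_list)
      have "b \<in> set (L2 @ L1)" using b a csL by auto
      then obtain U V where UV: "L2 @ L1 = U @ b # V" by (meson split_list)
      define cs0 where "cs0 = a # U @ b # V"
      have cs0eq: "cs0 = (a # L2) @ L1" unfolding cs0_def using UV by simp
      have e0: "B_cycle K i cs0 \<and> cycle_sign ori cs0 = cycle_sign ori cs \<and> length cs0 = length cs"
        using cycle_swap[of K i "a # L2" L1 ori] cyc unfolding cs0eq csL by auto
      have adj0: "\<forall>p\<in>set (cpairs cs0). B_adj K i (fst p) (snd p)"
        using e0 unfolding B_cycle_alt by auto
      then have adjU: "\<forall>p\<in>set (ppairs (a # U @ [b])). B_adj K i (fst p) (snd p)"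
        and adjV: "\<forall>p\<in>set (ppairs (b # V @ [a])). B_adj K i (fst p) (snd p)"
        unfolding cs0_def cpairs_split by auto
      have "\<exists>x0\<in>set U. x0 \<in> A \<and> x0 \<in> B"
      proof (rule ccontr)
        assume "\<not> ?thesis"
        then have "b \<in> A" using cross[of K i A B a U b] split_adj adjU a by blast
        then show False using b by simp
      qed
      then obtain x0 where x0: "x0 \<in> set U" "x0 \<in> A" "x0 \<in> B" by blast
      have "\<exists>y0\<in>set V. y0 \<in> A \<and> y0 \<in> B"
      proof (rule ccontr)
        assume "\<not> ?thesis"
        then have "a \<in> B" using cross[of K i B A b V a] split_adj adjV b by blast
        then show False using a by simp
      qed
      then obtain y0 where y0: "y0 \<in> set V" "y0 \<in> A" "y0 \<in> B" by blast
      have "\<exists>x y. x \<in> set U \<and> y \<in> set V \<and> x \<in> A \<and> x \<in> B \<and> y \<in> A \<and> y \<in> B \<and>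
          (F \<in> set cs0 \<longrightarrow> x = F \<or> y = F)"
      proof (cases "F \<in> set U")
        case True then show ?thesis using y0 FA FB by blast
      next
        case False
        show ?thesis
        proof (cases "F \<in> set V")
          case True then show ?thesis using x0 FA FB by blast
        next
          case False
          then have "F \<notin> set cs0" using \<open>F \<notin> set U\<close> a b FA FB unfolding cs0_def by auto
          then show ?thesis using x0 y0 by blast
        qed
      qed
      then obtain x y where xy: "x \<in> set U" "y \<in> set V" "x \<in> A" "x \<in> B" "y \<in> A" "y \<in> B"
        "F \<in> set cs0 \<longrightarrow> x = F \<or> y = F" by blast
      obtain U1 U2 where U12: "U = U1 @ x # U2" using xy(1) by (meson split_list)
      obtain V1 V2 where V12: "V = V1 @ y # V2" using xy(2) by (meson split_list)
      define P1 where "P1 = U2 @ b # V1"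
      define P2 where "P2 = V2 @ a # U1"
      define cs1 where "cs1 = x # P1 @ y # P2"
      have e1: "B_cycle K i cs1 \<and> cycle_sign ori cs1 = cycle_sign ori cs \<and> length cs1 = length cs"
        using cycle_swap[of K i "a # U1" "x # U2 @ b # V1 @ y # V2" ori] e0
        unfolding cs1_def cs0_def P1_def P2_def U12 V12 by auto
      have set1: "set cs1 = set cs0" unfolding cs1_def cs0_def P1_def P2_def U12 V12 by auto
      have cyc1: "B_cycle K i cs1" using e1 by simp
      have d1: "distinct cs1" using cyc1 unfolding B_cycle_def by simp
      then have xny: "x \<noteq> y" unfolding cs1_def by auto
      have sK1: "set cs1 \<subseteq> B_vertices K i" using cyc1 unfolding B_cycle_def by simp
      have xV: "x \<in> B_vertices K i" "y \<in> B_vertices K i" using sK1 unfolding cs1_def by auto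
      have ne: "P1 \<noteq> []" "P2 \<noteq> []" unfolding P1_def P2_def by auto
      have IH: "\<And>c. B_cycle K i c \<Longrightarrow> length c < length cs1 \<Longrightarrow> cycle_sign ori c = 1"
        using less.hyps e1 by metis
      have "cycle_sign ori cs1 = 1"
      proof (cases "x = F")
        case True
        then have "B_adj K i y x" using shared_card[OF xV(2) xy(5,6)] xny by auto
        then have ch: "B_adj K i x y" by (simp add: B_adj_sym)
        from split_chord[OF cyc1[unfolded cs1_def] ne ch, of ori]
        show ?thesis using IH unfolding cs1_def by auto
      next
        case xF: False
        show ?thesis
        proof (cases "y = F")
          case True
          then have ch: "B_adj K i x y" using shared_card[OF xV(1) xy(3,4)] xF by auto
          from split_chord[OF cyc1[unfolded cs1_def] ne ch, of ori]
          show ?thesis using IH unfolding cs1_def by auto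
        next
          case yF: False
          have Fn: "F \<notin> set cs1" using xy(7) xF yF set1 by auto
          have sx: "card x = i + 1" "card F = i + 2" "B_adj K i x F"
            using shared_card[OF xV(1) xy(3,4) xF] by auto
          have sy: "card y = i + 1" "B_adj K i y F"
            using shared_card[OF xV(2) xy(5,6) yF] by auto
          have FV: "F \<in> B_vertices K i"
            using sx FA KAB unfolding B_vertices_def faces_of_dim_def by auto
          have xsF: "x \<subseteq> F" "y \<subseteq> F" using AB xy by auto
          have adj1: "\<forall>p\<in>set (cpairs cs1). B_adj K i (fst p) (snd p)"
            using cyc1 unfolding B_cycle_alt by auto
          have mid: "c = F" if "B_adj K i x c" "B_adj K i c y" for c
          proof -
            have h1: "x \<subseteq> c" "card c = i + 2" "finite c" using adj_facet[OF that(1) sx(1)] by auto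
            have "B_adj K i y c" using that(2) by (simp add: B_adj_sym)
            then have h2: "y \<subseteq> c" using adj_facet[OF _ sy(1)] by auto
            show ?thesis by (rule facet_common[OF xny xsF sx(1) sy(1) sx(2) finF h1(3) h1(2) h1(1) h2])
          qed
          have l1: "length P1 \<ge> 2"
          proof (rule ccontr)
            assume "\<not> ?thesis"
            then have "U2 = [] \<and> V1 = []" unfolding P1_def by (cases U2; cases V1) auto
            then have "cpairs cs1 = ppairs [x, b, y] @ ppairs (y # P2 @ [x])"
              unfolding cs1_def P1_def cpairs_split by simp
            then have "B_adj K i x b" "B_adj K i b y" using adj1 by (auto simp: ppairs_def)
            then have "b = F" using mid by blast
            then show False using b FA by simp
          qed
          have l2: "length P2 \<ge> 2"
          proof (rule ccontr)
            assume "\<not> ?thesis"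
            then have "V2 = [] \<and> U1 = []" unfolding P2_def by (cases U1; cases V2) auto
            then have "cpairs cs1 = ppairs (x # P1 @ [y]) @ ppairs [y, a, x]"
              unfolding cs1_def P2_def cpairs_split by simp
            then have "B_adj K i y a" "B_adj K i a x" using adj1 by (auto simp: ppairs_def)
            then have "a = F" using mid by (simp add: B_adj_sym)
            then show False using a FB by simp
          qed
          from split_ext[OF cyc1[unfolded cs1_def] l1 l2 Fn[unfolded cs1_def] FV sx(3) sy(2), of ori]
          show ?thesis using IH unfolding cs1_def by auto
        qed
      qed
      then show ?thesis using e1 by simp
    qed
  qed
qed

theorem decomp_iff:
  "B_balanced K ori i \<longleftrightarrow> B_balanced A ori i \<and> B_balanced B ori i"
  using decomp cycle_monoA cycle_monoB unfolding B_balanced_def by blast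

end



lemma prod_list_mult: "prod_list (map (\<lambda>p. f p * g p) xs) = prod_list (map f xs) * (prod_list (map g xs) :: int)"
  by (induction xs) (auto simp: ac_simps)

lemma prod_list_sq: "(\<forall>x\<in>set xs. f x * f x = (1::int)) \<Longrightarrow> prod_list (map f xs) * prod_list (map f xs) = 1"
proof (induction xs)
  case Nil then show ?case by simp
next
  case (Cons a xs)
  have "prod_list (map f (a # xs)) * prod_list (map f (a # xs)) =
    (f a * f a) * (prod_list (map f xs) * prod_list (map f xs))" by (simp add: ac_simps)
  then show ?case using Cons by simp
qed

lemma diff_single:
  assumes "u \<subseteq> v" "finite v" "card v = Suc (card u)"
  shows "\<exists>x. v - u = {x}"
proof -
  have "card (v - u) = 1" using assms by (simp add: card_Diff_subset finite_subset)
  then show ?thesis by (meson card_1_singletonE)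
qed

lemma B_sign_reorient:
  assumes o1: "orientation K o1" and o2: "orientation K o2" and fin: "\<forall>G\<in>K. finite G"
    and adj: "B_adj K i a b"
  shows "B_sign o2 a b = (-1) ^ inversions (o2 a) (o1 a) * (-1) ^ inversions (o2 b) (o1 b) * B_sign o1 a b"
proof -
  have gen: "incidence_sign o2 u v = (-1) ^ inversions (o2 u) (o1 u) * (-1) ^ inversions (o2 v) (o1 v) * incidence_sign o1 u v"
    if "u \<in> K" "v \<in> K" "u \<subseteq> v" "card v = Suc (card u)" for u v
  proof -
    note th = that
    obtain x where x: "v - u = {x}" using diff_single[OF th(3) _ th(4)] fin th(2) by blast
    show ?thesis
      by (rule reorient_sign[OF _ _ _ _ _ _ _ _ x that(3)])
         (use o1 o2 that in \<open>auto simp: orientation_def\<close>)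
  qed
  from adj show ?thesis
    unfolding B_adj_def faces_of_dim_def B_sign_def
    using gen by (auto simp: ac_simps)
qed

lemma bal_reorient:
  assumes o1: "orientation K o1" and o2: "orientation K o2" and fin: "\<forall>G\<in>K. finite G"
  shows "B_balanced K o1 i = B_balanced K o2 i"
proof -
  have "cycle_sign o2 cs = cycle_sign o1 cs" if c: "B_cycle K i cs" for cs
  proof -
    define e where "e w = (-1::int) ^ inversions (o2 w) (o1 w)" for w
    have adjs: "\<forall>p\<in>set (cpairs cs). B_adj K i (fst p) (snd p)" using c unfolding B_cycle_alt by auto
    have m: "map (\<lambda>p. B_sign o2 (fst p) (snd p)) (cpairs cs) =
       map (\<lambda>p. (e (fst p) * e (snd p)) * B_sign o1 (fst p) (snd p)) (cpairs cs)"
    proof (rule map_cong[OF refl])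
      fix p assume "p \<in> set (cpairs cs)"
      then have "B_adj K i (fst p) (snd p)" using adjs by blast
      from B_sign_reorient[OF o1 o2 fin this]
      show "B_sign o2 (fst p) (snd p) = (e (fst p) * e (snd p)) * B_sign o1 (fst p) (snd p)"
        unfolding e_def .
    qed
    have mf: "map fst (cpairs cs) = cs" unfolding cpairs_def by (simp add: map_fst_zip)
    have ms: "map snd (cpairs cs) = rotate1 cs" unfolding cpairs_def by (simp add: map_snd_zip)
    have p1: "prod_list (map (\<lambda>p. e (fst p)) (cpairs cs)) = prod_list (map e cs)"
    proof -
      have "map (\<lambda>p. e (fst p)) (cpairs cs) = map e (map fst (cpairs cs))" by (simp only: map_map comp_def)
      then show ?thesis using mf by simp
    qed
    have p2: "prod_list (map (\<lambda>p. e (snd p)) (cpairs cs)) = prod_list (map e cs)"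
    proof -
      have "map (\<lambda>p. e (snd p)) (cpairs cs) = map e (map snd (cpairs cs))" by (simp only: map_map comp_def)
      then show ?thesis using ms prod_list_rotate1[of e cs] by simp
    qed
    have sq: "prod_list (map e cs) * prod_list (map e cs) = 1"
    proof (rule prod_list_sq, rule ballI)
      fix x show "e x * e x = 1" unfolding e_def by (simp add: power_mult_distrib[symmetric])
    qed
    have "cycle_sign o2 cs = prod_list (map (\<lambda>p. (e (fst p) * e (snd p)) * B_sign o1 (fst p) (snd p)) (cpairs cs))"
      unfolding cycle_sign_alt m ..
    also have "\<dots> = prod_list (map (\<lambda>p. e (fst p) * e (snd p)) (cpairs cs)) * cycle_sign o1 cs"
      unfolding cycle_sign_alt by (rule prod_list_mult)
    also have "prod_list (map (\<lambda>p. e (fst p) * e (snd p)) (cpairs cs)) =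
        prod_list (map (\<lambda>p. e (fst p)) (cpairs cs)) * prod_list (map (\<lambda>p. e (snd p)) (cpairs cs))"
      by (rule prod_list_mult)
    finally show ?thesis unfolding p1 p2 sq by simp
  qed
  then show ?thesis unfolding B_balanced_def by auto
qed



lemma pos_map: "inj_on g (insert x (set L)) \<Longrightarrow> pos (map g L) (g x) = pos L x"
proof (induction L)
  case Nil then show ?case by simp
next
  case (Cons a L)
  have "g a = g x \<longleftrightarrow> a = x" using inj_onD[OF Cons.prems] by auto
  then show ?case using Cons by (auto simp: inj_on_insert insert_commute)
qed

lemma remove1_map: "inj_on g (insert x (set L)) \<Longrightarrow> remove1 (g x) (map g L) = map g (remove1 x L)"
proof (induction L)
  case Nil then show ?case by simp
next
  case (Cons a L)
  have "g a = g x \<longleftrightarrow> a = x" using inj_onD[OF Cons.prems] by auto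
  then show ?case using Cons by (auto simp: inj_on_insert insert_commute)
qed

lemma inv_map:
  assumes "inj_on g (set xs \<union> set ys)"
  shows "inversions (map g xs) (map g ys) = inversions xs ys"
proof -
  have "\<And>a. a < length xs \<Longrightarrow> pos (map g ys) (g (xs ! a)) = pos ys (xs ! a)"
  proof -
    fix a assume "a < length xs"
    then have "xs ! a \<in> set xs" by simp
    then have "inj_on g (insert (xs ! a) (set ys))" using assms by (rule_tac inj_on_subset) auto
    then show "pos (map g ys) (g (xs ! a)) = pos ys (xs ! a)" by (rule pos_map)
  qed
  then have "{(a, b). a < b \<and> b < length (map g xs) \<and> pos (map g ys) (map g xs ! a) > pos (map g ys) (map g xs ! b)}
     = {(a, b). a < b \<and> b < length xs \<and> pos ys (xs ! a) > pos ys (xs ! b)}"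
    by auto
  then show ?thesis unfolding inversions_def by simp
qed

lemma isign_map:
  assumes inj: "inj_on g S" and s: "set (o' u) \<subseteq> S" "set (o' v) \<subseteq> S" "v \<subseteq> S" "u \<subseteq> v"
    and x: "v - u = {x}" and ou: "ori (g ` u) = map g (o' u)" and ov: "ori (g ` v) = map g (o' v)"
  shows "incidence_sign ori (g ` u) (g ` v) = incidence_sign o' u v"
proof -
  have "g ` v - g ` u = g ` (v - u)" using inj s by (metis Diff_subset inj_on_image_set_diff subset_trans)
  then have te: "the_elem (g ` v - g ` u) = g x" using x by simp
  have te2: "the_elem (v - u) = x" using x by simp
  have xS: "x \<in> S" using x s by auto
  have i1: "inj_on g (insert x (set (o' v)))" using inj s xS by (rule_tac inj_on_subset) auto
  have i2: "inj_on g (set (o' u) \<union> set (remove1 x (o' v)))"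
    using inj s set_remove1_subset[of x "o' v"] by (meson Un_least inj_on_subset subset_trans)
  show ?thesis unfolding isign_pow te te2 ou ov
    using pos_map[OF i1] remove1_map[OF i1] inv_map[OF i2] by simp
qed

locale relabel =
  fixes K2 :: "'v set set" and g :: "'v \<Rightarrow> 'v" and V :: "'v set" and ori :: "'v set \<Rightarrow> 'v list"
  assumes inj: "inj_on g V" and sub: "\<And>H. H \<in> K2 \<Longrightarrow> H \<subseteq> V \<and> finite H"
    and ori: "orientation ((\<lambda>H. g ` H) ` K2) ori"
begin

definition o' :: "'v set \<Rightarrow> 'v list" where
  "o' H = map (inv_into V g) (ori (g ` H))"

abbreviation hK where "hK \<equiv> (\<lambda>H. g ` H) ` K2"

lemma ori_set: "H \<in> K2 \<Longrightarrow> set (ori (g ` H)) = g ` H \<and> distinct (ori (g ` H))"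
  using ori unfolding orientation_def by auto

lemma ori_map: "H \<in> K2 \<Longrightarrow> ori (g ` H) = map g (o' H)"
proof -
  assume H: "H \<in> K2"
  have "\<forall>y \<in> set (ori (g ` H)). y \<in> g ` V" using ori_set[OF H] sub[OF H] by auto
  then show ?thesis unfolding o'_def by (simp add: map_idI f_inv_into_f)
qed

lemma o'_orient: "orientation K2 o'"
  unfolding orientation_def
proof
  fix H assume H: "H \<in> K2"
  have s: "set (ori (g ` H)) \<subseteq> g ` V" using ori_set[OF H] sub[OF H] by auto
  have "distinct (o' H)" unfolding o'_def using ori_set[OF H] inj_on_inv_into[OF s]
    by (simp add: distinct_map)
  moreover have "set (o' H) = H" unfolding o'_def using ori_set[OF H] sub[OF H] inj by simp
  ultimately show "distinct (o' H) \<and> set (o' H) = H" by simp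
qed

lemma o'_set: "H \<in> K2 \<Longrightarrow> set (o' H) = H"
  using o'_orient unfolding orientation_def by auto

lemma img_eq: "u \<in> K2 \<Longrightarrow> v \<in> K2 \<Longrightarrow> g ` u = g ` v \<longleftrightarrow> u = v"
  using inj_on_image_eq_iff[OF inj, of u v] sub[of u] sub[of v] by blast

lemma img_sub: "u \<in> K2 \<Longrightarrow> v \<in> K2 \<Longrightarrow> g ` u \<subseteq> g ` v \<longleftrightarrow> u \<subseteq> v"
proof -
  assume uv: "u \<in> K2" "v \<in> K2"
  show ?thesis
  proof
    assume "g ` u \<subseteq> g ` v"
    then have "inv_into V g ` g ` u \<subseteq> inv_into V g ` g ` v" by blast
    then show "u \<subseteq> v" using inj sub uv by simp
  qed auto
qed

lemma img_card: "H \<in> K2 \<Longrightarrow> card (g ` H) = card H"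
  using inj sub by (meson card_image inj_on_subset)

lemma img_mem: "H \<subseteq> V \<Longrightarrow> g ` H \<in> hK \<longleftrightarrow> H \<in> K2"
proof
  assume H: "H \<subseteq> V" "g ` H \<in> hK"
  then obtain H' where "H' \<in> K2" "g ` H = g ` H'" by auto
  then show "H \<in> K2" using inj_on_image_eq_iff[OF inj, of H H'] sub[of H'] H by auto
qed auto

lemma fd: "H \<in> K2 \<Longrightarrow> g ` H \<in> faces_of_dim hK j \<longleftrightarrow> H \<in> faces_of_dim K2 j"
  unfolding faces_of_dim_def using img_card by auto

lemma adj: "u \<in> K2 \<Longrightarrow> v \<in> K2 \<Longrightarrow> B_adj hK i (g ` u) (g ` v) \<longleftrightarrow> B_adj K2 i u v"
  unfolding B_adj_def by (simp add: fd img_sub)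

lemma vert: "H \<in> K2 \<Longrightarrow> g ` H \<in> B_vertices hK i \<longleftrightarrow> H \<in> B_vertices K2 i"
  unfolding B_vertices_def using fd by auto

lemma sign: "B_adj K2 i u v \<Longrightarrow> B_sign ori (g ` u) (g ` v) = B_sign o' u v"
proof -
  have gen: "incidence_sign ori (g ` a) (g ` b) = incidence_sign o' a b"
    if "a \<in> K2" "b \<in> K2" "a \<subseteq> b" "card b = Suc (card a)" for a b
  proof -
    note th = that
    have fb: "finite b" using sub th(2) by blast
    obtain x where x: "b - a = {x}" using diff_single[OF th(3) fb th(4)] by blast
    show ?thesis
      by (rule isign_map[OF inj _ _ _ th(3) x ori_map[OF th(1)] ori_map[OF th(2)]])
         (use th sub o'_set in auto)
  qed
  assume h: "B_adj K2 i u v"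
  show ?thesis
  proof (cases "card u < card v")
    case True
    then have "u \<in> K2" "v \<in> K2" "u \<subseteq> v" "card v = Suc (card u)"
      using h unfolding B_adj_def faces_of_dim_def by auto
    then show ?thesis unfolding B_sign_def using gen img_card True by simp
  next
    case False
    then have "u \<in> K2" "v \<in> K2" "v \<subseteq> u" "card u = Suc (card v)"
      using h unfolding B_adj_def faces_of_dim_def by auto
    then show ?thesis unfolding B_sign_def using gen img_card False by simp
  qed
qed

lemma cpairs_map: "cpairs (map h cs) = map (\<lambda>p. (h (fst p), h (snd p))) (cpairs cs)"
  unfolding cpairs_def rotate1_map zip_map_map by (auto simp: case_prod_beta)

lemma cyc: "set cs \<subseteq> K2 \<Longrightarrow> B_cycle hK i (map (\<lambda>H. g ` H) cs) \<longleftrightarrow> B_cycle K2 i cs"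
proof -
  assume s: "set cs \<subseteq> K2"
  have d: "distinct (map (\<lambda>H. g ` H) cs) \<longleftrightarrow> distinct cs"
  proof -
    have "inj_on (\<lambda>H. g ` H) (set cs)" using s img_eq by (meson inj_onI subsetD)
    then show ?thesis by (simp add: distinct_map)
  qed
  have v: "set (map (\<lambda>H. g ` H) cs) \<subseteq> B_vertices hK i \<longleftrightarrow> set cs \<subseteq> B_vertices K2 i"
  proof -
    have "\<forall>H\<in>set cs. (g ` H \<in> B_vertices hK i) = (H \<in> B_vertices K2 i)" using s vert by blast
    then show ?thesis by auto
  qed
  have cp: "set (cpairs cs) \<subseteq> K2 \<times> K2"
  proof
    fix p assume p: "p \<in> set (cpairs cs)"
    have "fst p \<in> K2" using p s unfolding cpairs_def by (metis prod.collapse set_zip_leftD subsetD)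
    moreover have "snd p \<in> K2" using p s unfolding cpairs_def
      by (metis prod.collapse set_zip_rightD subsetD set_rotate1)
    ultimately show "p \<in> K2 \<times> K2" by (cases p) auto
  qed
  have a: "(\<forall>p\<in>set (cpairs (map (\<lambda>H. g ` H) cs)). B_adj hK i (fst p) (snd p)) \<longleftrightarrow>
      (\<forall>p\<in>set (cpairs cs). B_adj K2 i (fst p) (snd p))"
  proof -
    have "\<forall>p\<in>set (cpairs cs). B_adj hK i (g ` fst p) (g ` snd p) = B_adj K2 i (fst p) (snd p)"
      using cp adj by (metis mem_Times_iff subsetD)
    then show ?thesis unfolding cpairs_map by auto
  qed
  show ?thesis unfolding B_cycle_alt using d v a by simp
qed

lemma cyc_sign: "B_cycle K2 i cs \<Longrightarrow> cycle_sign ori (map (\<lambda>H. g ` H) cs) = cycle_sign o' cs"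
proof -
  assume c: "B_cycle K2 i cs"
  have adjs: "\<forall>p\<in>set (cpairs cs). B_adj K2 i (fst p) (snd p)" using c unfolding B_cycle_alt by auto
  show ?thesis unfolding cycle_sign_alt cpairs_map map_map comp_def fst_conv snd_conv
  proof (rule arg_cong[where f = prod_list], rule map_cong[OF refl])
    fix p assume "p \<in> set (cpairs cs)"
    then show "B_sign ori (g ` fst p) (g ` snd p) = B_sign o' (fst p) (snd p)"
      using adjs sign by blast
  qed
qed

lemma bal: "B_balanced hK ori i \<longleftrightarrow> B_balanced K2 o' i"
proof
  assume b: "B_balanced hK ori i"
  show "B_balanced K2 o' i" unfolding B_balanced_def
  proof (intro allI impI)
    fix cs assume c: "B_cycle K2 i cs"
    then have s: "set cs \<subseteq> K2" unfolding B_cycle_def B_vertices_def faces_of_dim_def by auto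
    then have "B_cycle hK i (map (\<lambda>H. g ` H) cs)" using cyc c by simp
    then show "cycle_sign o' cs = 1" using b cyc_sign[OF c] unfolding B_balanced_def by simp
  qed
next
  assume b: "B_balanced K2 o' i"
  show "B_balanced hK ori i" unfolding B_balanced_def
  proof (intro allI impI)
    fix cs' assume c: "B_cycle hK i cs'"
    then have s': "set cs' \<subseteq> hK" unfolding B_cycle_def B_vertices_def faces_of_dim_def by auto
    define cs where "cs = map (\<lambda>H. inv_into V g ` H) cs'"
    have e: "cs' = map (\<lambda>H. g ` H) cs" unfolding cs_def map_map comp_def
    proof (rule map_idI[symmetric])
      fix H assume "H \<in> set cs'"
      then obtain G where "G \<in> K2" "H = g ` G" using s' by auto
      then show "g ` inv_into V g ` H = H" using inj sub by simp
    qed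
    have s: "set cs \<subseteq> K2" unfolding cs_def using s' inj sub by auto
    have "B_cycle K2 i cs" using cyc[OF s] c e by simp
    then show "cycle_sign ori cs' = 1" using b cyc_sign e unfolding B_balanced_def by simp
  qed
qed

end



lemma orient_sub: "orientation K ori \<Longrightarrow> A \<subseteq> K \<Longrightarrow> orientation A ori"
  unfolding orientation_def by auto

theorem mainTheorem5:
  fixes K1 K2 :: "'v set set" and F1 F2 :: "'v set" and f :: "'v \<Rightarrow> 'v"
    and k i :: nat and ori ori1 ori2 :: "'v set \<Rightarrow> 'v list"
  assumes "simplicial_complex K1" and "simplicial_complex K2"
    and "\<Union>K1 \<inter> \<Union>K2 = {}"
    and "F1 \<in> faces_of_dim K1 k" and "F2 \<in> faces_of_dim K2 k"
    and "bij_betw f F2 F1"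
    and "k \<le> i + 1"
    and "orientation (wedge_sum K1 K2 F2 f) ori"
    and "orientation K1 ori1" and "orientation K2 ori2"
  shows "B_balanced (wedge_sum K1 K2 F2 f) ori i \<longleftrightarrow>
           B_balanced K1 ori1 i \<and> B_balanced K2 ori2 i"
proof -
  note sc1 = assms(1) and sc2 = assms(2) and disj = assms(3) and bij = assms(6)
  have sc1f: "\<forall>F\<in>K1. finite F \<and> F \<noteq> {}" and sc1c: "\<forall>F\<in>K1. \<forall>G. G \<subseteq> F \<and> G \<noteq> {} \<longrightarrow> G \<in> K1"
    using sc1 unfolding simplicial_complex_def by blast+
  have sc2f: "\<forall>F\<in>K2. finite F \<and> F \<noteq> {}" and sc2c: "\<forall>F\<in>K2. \<forall>G. G \<subseteq> F \<and> G \<noteq> {} \<longrightarrow> G \<in> K2"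
    using sc2 unfolding simplicial_complex_def by blast+
  define g where "g = wedge_map F2 f"
  define V2 where "V2 = \<Union>K2"
  define K2' where "K2' = (\<lambda>H. g ` H) ` K2"
  define K where "K = wedge_sum K1 K2 F2 f"
  have KK: "K = K1 \<union> K2'" unfolding K_def K2'_def g_def wedge_sum_def ..
  have F1K: "F1 \<in> K1" "card F1 = k + 1" using assms(4) unfolding faces_of_dim_def by auto
  have F2K: "F2 \<in> K2" "card F2 = k + 1" using assms(5) unfolding faces_of_dim_def by auto
  have F1V: "F1 \<subseteq> \<Union>K1" using F1K by auto
  have F2V: "F2 \<subseteq> V2" using F2K unfolding V2_def by auto
  have fF: "f ` F2 = F1" using bij by (simp add: bij_betw_def)
  have injf: "inj_on f F2" using bij by (simp add: bij_betw_def)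
  have gF: "g ` F2 = F1" unfolding g_def wedge_map_def using fF by auto
  have fin1: "\<forall>G\<in>K1. finite G" using sc1f by blast
  have fin2: "\<And>H. H \<in> K2 \<Longrightarrow> H \<subseteq> V2 \<and> finite H"
    using sc2f unfolding V2_def by blast
  have injg: "inj_on g V2"
  proof (rule inj_onI)
    fix u v assume uv: "u \<in> V2" "v \<in> V2" "g u = g v"
    show "u = v"
    proof (cases "u \<in> F2"; cases "v \<in> F2")
      assume "u \<in> F2" "v \<in> F2"
      then show ?thesis using uv injf unfolding g_def wedge_map_def by (auto dest: inj_onD)
    next
      assume a: "u \<in> F2" "v \<notin> F2"
      then have "f u = v" using uv unfolding g_def wedge_map_def by auto
      moreover have "f u \<in> \<Union>K1" using a fF F1V by auto
      ultimately show ?thesis using uv disj unfolding V2_def by auto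
    next
      assume a: "u \<notin> F2" "v \<in> F2"
      then have "f v = u" using uv unfolding g_def wedge_map_def by auto
      moreover have "f v \<in> \<Union>K1" using a fF F1V by auto
      ultimately show ?thesis using uv disj unfolding V2_def by auto
    next
      assume "u \<notin> F2" "v \<notin> F2"
      then show ?thesis using uv unfolding g_def wedge_map_def by auto
    qed
  qed
  have oriK: "orientation K ori" using assms(8) unfolding K_def .
  have ori1': "orientation K1 ori" using orient_sub[OF oriK] KK by auto
  have ori2': "orientation K2' ori" using orient_sub[OF oriK] KK by auto
  interpret R: relabel K2 g V2 ori
    by unfold_locales (use injg fin2 ori2' in \<open>auto simp: K2'_def\<close>)
  have dA: "dclosed K1" using sc1c unfolding dclosed_def by blast
  have dB: "dclosed K2'"
    unfolding dclosed_def
  proof (intro ballI allI impI)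
    fix G H assume G: "G \<in> K2'" and H: "H \<subseteq> G \<and> H \<noteq> {}"
    then obtain G2 where G2: "G2 \<in> K2" "G = g ` G2" unfolding K2'_def by auto
    define G0 where "G0 = {v \<in> G2. g v \<in> H}"
    have "G0 \<subseteq> G2" "G0 \<noteq> {}" using H G2 unfolding G0_def by auto
    then have "G0 \<in> K2" using sc2c G2 by blast
    moreover have "g ` G0 = H" using H G2 unfolding G0_def by auto
    ultimately show "H \<in> K2'" unfolding K2'_def by auto
  qed
  have AB: "G \<subseteq> F1" if "G \<in> K1" "G \<in> K2'" for G
  proof
    note th = that
    fix w assume w: "w \<in> G"
    obtain G2 where G2: "G2 \<in> K2" "G = g ` G2" using th unfolding K2'_def by auto
    then obtain v where v: "v \<in> G2" "w = g v" using w by auto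
    show "w \<in> F1"
    proof (cases "v \<in> F2")
      case True then show ?thesis using v gF by auto
    next
      case False
      then have "w = v" using v unfolding g_def wedge_map_def by auto
      moreover have "v \<in> V2" using fin2 G2 v by auto
      moreover have "w \<in> \<Union>K1" using w th by auto
      ultimately show ?thesis using disj unfolding V2_def by auto
    qed
  qed
  interpret W: wsplit K K1 K2' F1 i
  proof unfold_locales
    show "K = K1 \<union> K2'" by (rule KK)
    show "dclosed K1" by (rule dA)
    show "dclosed K2'" by (rule dB)
    show "\<forall>G\<in>K. finite G" using KK fin1 fin2 unfolding K2'_def by auto
    show "F1 \<in> K1" by (rule F1K(1))
    show "F1 \<in> K2'" unfolding K2'_def using gF F2K by (metis image_eqI)
    show "\<And>G. G \<in> K1 \<Longrightarrow> G \<in> K2' \<Longrightarrow> G \<subseteq> F1" using AB by blast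
    show "card F1 \<le> i + 2" using F1K assms(7) by simp
  qed
  have "B_balanced K ori i \<longleftrightarrow> B_balanced K1 ori i \<and> B_balanced K2' ori i"
    by (rule W.decomp_iff)
  also have "B_balanced K1 ori i \<longleftrightarrow> B_balanced K1 ori1 i"
    by (rule bal_reorient[OF ori1' assms(9) fin1])
  also have "B_balanced K2' ori i \<longleftrightarrow> B_balanced K2 R.o' i"
    unfolding K2'_def by (rule R.bal)
  also have "B_balanced K2 R.o' i \<longleftrightarrow> B_balanced K2 ori2 i"
    by (rule bal_reorient[OF R.o'_orient assms(10)]) (use fin2 in auto)
  finally show ?thesis unfolding K_def .
qed


end
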